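(* Let $\mathcal T$ be an admissible labeled tree. For an unordered pair of labels $\{i,j\}$ let $b_{ij}$ be the number of edges of $\mathcal T$ whose endpoints have labels $i$ and $j$. Then \[ \sum_{\{i,j\}:\,b_{ij}>2} b_{ij}\le 6\,\Delta(\mathcal T). \]
   Context: Setting: $T$ is a finite rooted tree with levels (root at level $t$, children of a level-$s$ vertex at level $s-1$). A labeling gives each vertex $v$ a label $\ell(v)\in[N]$. The labeled tree $\mathcal T$ is admissible if (i) whenever $u$ is the parent of $v$ and $v$ the parent of $w$, $\ell(u)\ne\ell(w)$; (ii) for every edge $\{u,v\}$ there is another edge $\{u',v'\}$ with $\{\ell(u'),\ell(v')\}=\{\ell(u),\ell(v)\}$. $|V(\mathcal T)|$ is the number of distinct labels used (including the root's), $|E(\mathcal T)|$ the number of edges, and $\Delta(\mathcal T)=\tfrac12|E(\mathcal T)|-|V(\mathcal T)|+1$. *)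

theory Defs
  imports Complex_Main
begin

text \<open>The root is at level t and every non-root vertex v has its
  parent par v in V, one level above v. (This forces V to be a rooted tree: following
  parents strictly increases the level, so every vertex reaches r.)
  The edges are the pairs {par v, v} for v in V - {r}, indexed by the child v.\<close>

definition leveled_rooted_tree ::
  "'a set \<Rightarrow> 'a \<Rightarrow> ('a \<Rightarrow> 'a) \<Rightarrow> ('a \<Rightarrow> nat) \<Rightarrow> nat \<Rightarrow> bool" where
  "leveled_rooted_tree V r par lev t \<longleftrightarrow>
     finite V \<and> r \<in> V \<and> lev r = t \<and>
     (\<forall>v \<in> V - {r}. par v \<in> V \<and> lev (par v) = lev v + 1)"

definition edge_labels :: "('a \<Rightarrow> 'a) \<Rightarrow> ('a \<Rightarrow> nat) \<Rightarrow> 'a \<Rightarrow> nat set" where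
  "edge_labels par l v = {l (par v), l v}"

definition admissible ::
  "'a set \<Rightarrow> 'a \<Rightarrow> ('a \<Rightarrow> 'a) \<Rightarrow> ('a \<Rightarrow> nat) \<Rightarrow> nat \<Rightarrow> nat \<Rightarrow> ('a \<Rightarrow> nat) \<Rightarrow> bool" where
  "admissible V r par lev t N l \<longleftrightarrow>
     leveled_rooted_tree V r par lev t \<and>
     (\<forall>v \<in> V. l v \<in> {1..N}) \<and>
     \<comment> \<open>(i) grandparent and grandchild have different labels\<close>
     (\<forall>w \<in> V - {r}. par w \<noteq> r \<longrightarrow> l (par (par w)) \<noteq> l w) \<and>
     \<comment> \<open>(ii) every edge has another edge with the same pair of labels\<close>
     (\<forall>v \<in> V - {r}. \<exists>v' \<in> V - {r}. v' \<noteq> v \<and> edge_labels par l v' = edge_labels par l v)"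

definition b_count :: "'a set \<Rightarrow> 'a \<Rightarrow> ('a \<Rightarrow> 'a) \<Rightarrow> ('a \<Rightarrow> nat) \<Rightarrow> nat set \<Rightarrow> nat" where
  "b_count V r par l P = card {v \<in> V - {r}. edge_labels par l v = P}"

definition num_labels :: "'a set \<Rightarrow> ('a \<Rightarrow> nat) \<Rightarrow> nat" where
  "num_labels V l = card (l ` V)"

definition num_edges :: "'a set \<Rightarrow> 'a \<Rightarrow> nat" where
  "num_edges V r = card (V - {r})"

definition Delta :: "'a set \<Rightarrow> 'a \<Rightarrow> ('a \<Rightarrow> nat) \<Rightarrow> real" where
  "Delta V r l = real (num_edges V r) / 2 - real (num_labels V l) + 1"

end

theory Submission
  imports Defs
begin

lemma labels_bound:
  fixes V :: "'a set" and lev :: "'a \<Rightarrow> nat"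
  shows "finite V \<Longrightarrow> r \<in> V \<Longrightarrow> (\<forall>v \<in> V - {r}. par v \<in> V \<and> lev (par v) = lev v + 1)
    \<Longrightarrow> card (l ` V) \<le> card (edge_labels par l ` (V - {r})) + 1"
proof (induct "card V" arbitrary: V rule: less_induct)
  case (less V)
  show ?case
  proof (cases "V = {r}")
    case True
    then show ?thesis by simp
  next
    case False
    let ?W = "V - {r}"
    have fW: "finite ?W" "?W \<noteq> {}" using less False by auto
    define m where "m = Min (lev ` ?W)"
    have "m \<in> lev ` ?W" unfolding m_def using fW by simp
    then obtain v where v: "v \<in> ?W" "lev v = m" by auto
    have vmin: "\<And>u. u \<in> ?W \<Longrightarrow> lev v \<le> lev u" using fW v unfolding m_def by simp
    define V' where "V' = V - {v}"
    have pv: "par v \<in> V'" using less(4) v unfolding V'_def by force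
    have r': "r \<in> V'" using less v unfolding V'_def by auto
    have cl: "\<forall>u \<in> V' - {r}. par u \<in> V' \<and> lev (par u) = lev u + 1"
    proof
      fix u assume u: "u \<in> V' - {r}"
      then have "u \<in> ?W" unfolding V'_def by auto
      then have "par u \<in> V" "lev (par u) = lev u + 1" "lev v \<le> lev u" using less(4) vmin by auto
      then show "par u \<in> V' \<and> lev (par u) = lev u + 1" unfolding V'_def by auto
    qed
    have lt: "card V' < card V" unfolding V'_def using less v by (meson Diff_iff card_Diff1_less)
    have IH: "card (l ` V') \<le> card (edge_labels par l ` (V' - {r})) + 1"
      using less(1)[OF lt] less(2) r' cl unfolding V'_def by auto
    have VV: "V = insert v V'" "V - {r} = insert v (V' - {r})" using v unfolding V'_def by auto
    have fin: "finite (edge_labels par l ` (V' - {r}))" using less(2) unfolding V'_def by auto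
    show ?thesis
    proof (cases "l v \<in> l ` V'")
      case True
      then have "l ` V = l ` V'" using VV by auto
      moreover have "card (edge_labels par l ` (V' - {r})) \<le> card (edge_labels par l ` (V - {r}))"
        using VV fin by (simp add: card_mono subset_insertI)
      ultimately show ?thesis using IH by simp
    next
      case nin: False
      have "edge_labels par l v \<notin> edge_labels par l ` (V' - {r})"
      proof
        assume "edge_labels par l v \<in> edge_labels par l ` (V' - {r})"
        then obtain u where u: "u \<in> V' - {r}" "edge_labels par l u = edge_labels par l v" by auto
        have "par u \<in> V'" using cl u by auto
        moreover have "l v \<in> {l (par u), l u}" using u(2) unfolding edge_labels_def by auto
        ultimately show False using nin u by auto
      qed
      then have c2: "card (edge_labels par l ` (V - {r})) = card (edge_labels par l ` (V' - {r})) + 1"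
        using VV fin by simp
      have "l ` V = insert (l v) (l ` V')" using VV by auto
      then have "card (l ` V) \<le> card (l ` V') + 1" using less(2) unfolding V'_def
        by (simp add: card_insert_le_m1 card_insert_if)
      then show ?thesis using IH c2 by simp
    qed
  qed
qed

theorem lemma2p12:
  fixes V :: "'a set" and r :: 'a and par :: "'a \<Rightarrow> 'a" and lev :: "'a \<Rightarrow> nat"
    and t N :: nat and l :: "'a \<Rightarrow> nat"
  assumes "admissible V r par lev t N l"
  shows "real (\<Sum>P \<in> {P. (\<exists>i j. P = {i, j}) \<and> b_count V r par l P > 2}. b_count V r par l P)
           \<le> 6 * Delta V r l"
proof -
  let ?E = "V - {r}"
  let ?f = "edge_labels par l"
  let ?S = "?f ` ?E"
  let ?b = "b_count V r par l"
  let ?A = "{P. (\<exists>i j. P = {i, j}) \<and> ?b P > 2}"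
  have tr: "leveled_rooted_tree V r par lev t" using assms unfolding admissible_def by auto
  have adm: "\<forall>v \<in> ?E. \<exists>v' \<in> ?E. v' \<noteq> v \<and> ?f v' = ?f v" using assms unfolding admissible_def by auto
  have finV: "finite V" and rV: "r \<in> V" and cl: "\<forall>v \<in> V - {r}. par v \<in> V \<and> lev (par v) = lev v + 1"
    using tr unfolding leveled_rooted_tree_def by auto
  have L: "card (l ` V) \<le> card ?S + 1" using labels_bound[OF finV rV cl] .
  have finS: "finite ?S" using finV by auto
  have sumE: "(\<Sum>P\<in>?S. ?b P) = card ?E"
  proof -
    have "card (\<Union>P\<in>?S. {v \<in> ?E. ?f v = P}) = (\<Sum>P\<in>?S. card {v \<in> ?E. ?f v = P})"
      by (rule card_UN_disjoint) (use finS finV in auto)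
    moreover have "(\<Union>P\<in>?S. {v \<in> ?E. ?f v = P}) = ?E" by auto
    ultimately show ?thesis unfolding b_count_def by simp
  qed
  have b2: "\<And>P. P \<in> ?S \<Longrightarrow> ?b P \<ge> 2"
  proof -
    fix P assume "P \<in> ?S"
    then obtain v where v: "v \<in> ?E" "?f v = P" by auto
    then obtain v' where v': "v' \<in> ?E" "v' \<noteq> v" "?f v' = ?f v" using adm by blast
    have "{v, v'} \<subseteq> {u \<in> ?E. ?f u = P}" using v v' by auto
    moreover have "finite {u \<in> ?E. ?f u = P}" using finV by auto
    ultimately have "card {v, v'} \<le> ?b P" unfolding b_count_def by (metis card_mono)
    then show "?b P \<ge> 2" using v' by simp
  qed
  have AS: "?A \<subseteq> ?S"
  proof
    fix P assume "P \<in> ?A"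
    then have "card {v \<in> ?E. ?f v = P} > 0" unfolding b_count_def by auto
    then have "{v \<in> ?E. ?f v = P} \<noteq> {}" by (metis card.empty less_irrefl)
    then show "P \<in> ?S" by auto
  qed
  have "(\<Sum>P\<in>?A. real (?b P)) \<le> (\<Sum>P\<in>?A. 3 * (real (?b P) - 2))"
    by (rule sum_mono) auto
  also have "\<dots> \<le> (\<Sum>P\<in>?S. 3 * (real (?b P) - 2))"
    by (rule sum_mono2[OF finS AS]) (use b2 in force)
  also have "\<dots> = 3 * real (\<Sum>P\<in>?S. ?b P) - 6 * real (card ?S)"
    by (simp add: sum_subtractf sum_distrib_left[symmetric])
  also have "\<dots> \<le> 6 * Delta V r l"
    unfolding Delta_def num_edges_def num_labels_def sumE using L
    by (simp add: of_nat_mono)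
  finally show ?thesis by simp
qed

end
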